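(* Let $n\ge1$ and $p$ a prime. The quotient $\Sigma(n,p)/\mathcal{R}(n,p)$ of the $p$-modular descent algebra by its radical is commutative.
   Context: A composition of $n$ is a sequence of positive integers with sum $n$. The descent algebra $\Sigma_n$ has basis $\{B_q\}$ indexed by compositions of $n$ with multiplication $B_qB_r=\sum_{Z\in S(q,r)}B_{c(Z)}$, where for $q=[a_1,\dots,a_s]$, $r=[b_1,\dots,b_t]$, $S(q,r)$ is the set of $s\times t$ non-negative integer matrices with row sums $a_i$ and column sums $b_j$, and $c(Z)$ is the composition obtained by reading the entries of $Z$ row by row and omitting zeros. Let $\mathcal{Z}_n$ be the subring of integral combinations of the $B_q$ and $\Sigma(n,p)=\mathcal{Z}_n/p\mathcal{Z}_n$ (the $p$-modular descent algebra), an $\mathbb{F}_p$-algebra with basis $\overline{B}_q$ (images of the $B_q$). $\mathcal{R}(n,p)$ denotes the (Jacobson) radical of $\Sigma(n,p)$. *)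

theory Defs
  imports "HOL-Algebra.Algebra"
begin

definition compositions :: "nat \<Rightarrow> nat list set" where
  "compositions n = {q. (\<forall>a\<in>set q. 0 < a) \<and> sum_list q = n}"

definition S_mat :: "nat list \<Rightarrow> nat list \<Rightarrow> nat list list set" where
  "S_mat q r = {Z. length Z = length q
      \<and> (\<forall>i<length q. length (Z!i) = length r \<and> sum_list (Z!i) = q!i)
      \<and> (\<forall>j<length r. (\<Sum>i<length q. Z!i!j) = r!j)}"

definition comp_of :: "nat list list \<Rightarrow> nat list" where
  "comp_of Z = filter (\<lambda>x. x \<noteq> 0) (concat Z)"

text \<open>Structure constants: B_q B_r = sum over c of struct_const q r c * B_c.\<close>
definition struct_const :: "nat list \<Rightarrow> nat list \<Rightarrow> nat list \<Rightarrow> nat" where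
  "struct_const q r c = card {Z \<in> S_mat q r. comp_of Z = c}"

text \<open>An element is the
  coefficient function (on compositions of n, zero elsewhere) with respect to the
  basis of images of B_q, coefficients represented by residues in {0..<p}.\<close>
definition descent_alg_mod :: "nat \<Rightarrow> nat \<Rightarrow> (nat list \<Rightarrow> int) ring" where
  "descent_alg_mod n p =
    \<lparr>partial_object.carrier = {f. (\<forall>q. f q \<in> {0..<int p}) \<and> (\<forall>q. q \<notin> compositions n \<longrightarrow> f q = 0)},
     monoid.mult = (\<lambda>f g c. if c \<in> compositions n then
               (\<Sum>q\<in>compositions n. \<Sum>r\<in>compositions n.
                   f q * g r * int (struct_const q r c)) mod int p
             else 0),
     monoid.one = (\<lambda>c. if c = [n] then 1 else 0),
     ring.zero = (\<lambda>c. 0),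
     ring.add = (\<lambda>f g c. (f c + g c) mod int p)\<rparr>"

definition left_ideal :: "('a, 'b) ring_scheme \<Rightarrow> 'a set \<Rightarrow> bool" where
  "left_ideal R I \<longleftrightarrow> additive_subgroup I R \<and>
     (\<forall>a\<in>carrier R. \<forall>x\<in>I. a \<otimes>\<^bsub>R\<^esub> x \<in> I)"

definition maximal_left_ideal :: "('a, 'b) ring_scheme \<Rightarrow> 'a set \<Rightarrow> bool" where
  "maximal_left_ideal R I \<longleftrightarrow> left_ideal R I \<and> I \<noteq> carrier R \<and>
     (\<forall>J. left_ideal R J \<and> I \<subseteq> J \<longrightarrow> J = I \<or> J = carrier R)"

definition jacobson_radical :: "('a, 'b) ring_scheme \<Rightarrow> 'a set" where
  "jacobson_radical R = carrier R \<inter> \<Inter> {I. maximal_left_ideal R I}"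

end

theory Submission
  imports Defs "HOL-Combinatorics.Permutations"
begin

lemma sum_list_ge_length: "(\<forall>a\<in>set q. (0::nat) < a) \<Longrightarrow> length q \<le> sum_list q"
  by (induction q) auto

lemma finite_compositions: "finite (compositions n)"
proof -
  have "compositions n \<subseteq> {xs. set xs \<subseteq> {0..n} \<and> length xs \<le> n}"
    unfolding compositions_def using sum_list_ge_length member_le_sum_list by fastforce
  moreover have "finite {xs. set xs \<subseteq> {0..n} \<and> length xs \<le> n}"
    by (rule finite_lists_length_le) simp
  ultimately show ?thesis by (rule finite_subset)
qed

lemma finite_S_mat: "finite (S_mat q r)"
proof -
  let ?A = "{xs. set xs \<subseteq> {0..sum_list q} \<and> length xs \<le> length r}"
  have fA: "finite ?A" by (rule finite_lists_length_le) simp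
  have "S_mat q r \<subseteq> {Z. set Z \<subseteq> ?A \<and> length Z \<le> length q}"
  proof
    fix Z assume Z: "Z \<in> S_mat q r"
    have "set Z \<subseteq> ?A"
    proof
      fix xs assume "xs \<in> set Z"
      then obtain i where i: "i < length q" "xs = Z!i" using Z unfolding S_mat_def
        by (auto simp: in_set_conv_nth)
      have "\<forall>x\<in>set xs. x \<le> sum_list q"
      proof
        fix x assume "x \<in> set xs"
        hence "x \<le> sum_list xs" by (auto intro: member_le_sum_list)
        also have "sum_list xs = q!i" using Z i unfolding S_mat_def by auto
        also have "\<dots> \<le> sum_list q" using i by (auto intro: member_le_sum_list)
        finally show "x \<le> sum_list q" .
      qed
      then show "xs \<in> ?A" using Z i unfolding S_mat_def by auto
    qed
    then show "Z \<in> {Z. set Z \<subseteq> ?A \<and> length Z \<le> length q}" using Z unfolding S_mat_def by auto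
  qed
  moreover have "finite {Z. set Z \<subseteq> ?A \<and> length Z \<le> length q}"
    by (rule finite_lists_length_le[OF fA])
  ultimately show ?thesis by (rule finite_subset)
qed

lemma sum_list_filter_nz: "sum_list (filter (\<lambda>x. x \<noteq> 0) xs) = (sum_list xs :: nat)"
  by (induction xs) simp_all

lemma S_mat_rows: "Z \<in> S_mat q r \<Longrightarrow> map sum_list Z = q"
  unfolding S_mat_def by (auto intro: nth_equalityI)

lemma comp_of_in: assumes "Z \<in> S_mat q r" "q \<in> compositions n"
  shows "comp_of Z \<in> compositions n"
proof -
  have "sum_list (comp_of Z) = sum_list (concat Z)" unfolding comp_of_def by (rule sum_list_filter_nz)
  also have "\<dots> = sum_list (map sum_list Z)" by (induction Z) auto
  also have "\<dots> = n" using S_mat_rows[OF assms(1)] assms(2) unfolding compositions_def by simp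
  finally show ?thesis unfolding compositions_def comp_of_def by auto
qed

lemma concat_filter_aux:
  assumes "\<forall>xs\<in>set Zs. sum_list xs \<noteq> (0::nat)"
  shows "length Zs \<le> length (concat (map (filter (\<lambda>x. x \<noteq> 0)) Zs)) \<and>
     (length (concat (map (filter (\<lambda>x. x \<noteq> 0)) Zs)) \<le> length Zs \<longrightarrow>
        concat (map (filter (\<lambda>x. x \<noteq> 0)) Zs) = map sum_list Zs)"
  using assms
proof (induction Zs)
  case Nil then show ?case by simp
next
  case (Cons xs Zs)
  let ?f = "filter (\<lambda>x. x \<noteq> (0::nat))"
  have s: "sum_list (?f xs) = sum_list xs" by (rule sum_list_filter_nz)
  have ne: "?f xs \<noteq> []" using Cons.prems s by force
  hence l1: "1 \<le> length (?f xs)" by (cases "?f xs") auto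
  from Cons have IH: "length Zs \<le> length (concat (map ?f Zs)) \<and>
     (length (concat (map ?f Zs)) \<le> length Zs \<longrightarrow> concat (map ?f Zs) = map sum_list Zs)" by simp
  show ?case
  proof (intro conjI impI)
    show "length (xs # Zs) \<le> length (concat (map ?f (xs # Zs)))" using IH l1 by simp
  next
    assume "length (concat (map ?f (xs # Zs))) \<le> length (xs # Zs)"
    hence a: "length (?f xs) = 1" and b: "length (concat (map ?f Zs)) \<le> length Zs" using IH l1 by simp_all
    then obtain y where y: "?f xs = [y]" by (cases "?f xs") auto
    hence "y = sum_list xs" using s by simp
    then show "concat (map ?f (xs # Zs)) = map sum_list (xs # Zs)" using y IH b by simp
  qed
qed

lemma lemmaA:
  assumes Z: "Z \<in> S_mat q r" and q: "\<forall>a\<in>set q. 0 < a"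
  shows "length q \<le> length (comp_of Z)" "length (comp_of Z) \<le> length q \<Longrightarrow> comp_of Z = q"
proof -
  have r: "map sum_list Z = q" by (rule S_mat_rows[OF Z])
  have "\<forall>xs\<in>set Z. sum_list xs \<noteq> 0"
  proof
    fix xs assume "xs \<in> set Z"
    hence "sum_list xs \<in> set q" using r by force
    thus "sum_list xs \<noteq> 0" using q by blast
  qed
  note aux = concat_filter_aux[OF this]
  have lz: "length Z = length q" using r by auto
  have c: "comp_of Z = concat (map (filter (\<lambda>x. x \<noteq> 0)) Z)" unfolding comp_of_def by (rule filter_concat)
  show "length q \<le> length (comp_of Z)" using aux lz c by simp
  show "length (comp_of Z) \<le> length q \<Longrightarrow> comp_of Z = q" using aux lz c r by simp
qed

definition Gc :: "nat list \<Rightarrow> nat list \<Rightarrow> nat multiset \<Rightarrow> nat" where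
  "Gc q r \<mu> = card {Z \<in> S_mat q r. mset (comp_of Z) = \<mu>}"

lemma mset_comp_of: "mset (comp_of Z) = filter_mset (\<lambda>x. x \<noteq> 0) (mset (concat Z))"
  unfolding comp_of_def by simp

lemma mset_concat_map: "(\<And>x. x \<in> set Z \<Longrightarrow> mset (f x) = mset x) \<Longrightarrow> mset (concat (map f Z)) = mset (concat Z)"
  by (induction Z) auto

lemma sum_list_perm: "\<sigma> permutes {..<length xs} \<Longrightarrow> sum_list (permute_list \<sigma> xs) = (sum_list xs :: nat)"
  by (metis mset_permute_list sum_mset_sum_list)

lemma Gc_le_perm:
  assumes "mset r = mset r'"
  shows "Gc q r' \<mu> \<le> Gc q r \<mu>"
proof -
  obtain \<sigma> where \<sigma>: "\<sigma> permutes {..<length r'}" "permute_list \<sigma> r' = r"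
    using mset_eq_permutation[OF assms] by blast
  have lr: "length r = length r'" using \<sigma>(2) by auto
  let ?F = "map (permute_list \<sigma>)"
  have img: "?F ` {Z \<in> S_mat q r'. mset (comp_of Z) = \<mu>} \<subseteq> {Z \<in> S_mat q r. mset (comp_of Z) = \<mu>}"
  proof
    fix Z' assume "Z' \<in> ?F ` {Z \<in> S_mat q r'. mset (comp_of Z) = \<mu>}"
    then obtain Z where Z: "Z \<in> S_mat q r'" "mset (comp_of Z) = \<mu>" and Z': "Z' = ?F Z" by blast
    have lZ: "length Z = length q" and rows: "\<And>i. i < length q \<Longrightarrow> length (Z!i) = length r' \<and> sum_list (Z!i) = q!i"
      and cols: "\<And>j. j < length r' \<Longrightarrow> (\<Sum>i<length q. Z!i!j) = r'!j"
      using Z(1) unfolding S_mat_def by auto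
    have lx: "\<And>x. x \<in> set Z \<Longrightarrow> length x = length r'" using rows lZ by (metis in_set_conv_nth)
    have "mset (concat Z') = mset (concat Z)" unfolding Z' by (rule mset_concat_map) (simp add: lx \<sigma>(1))
    hence m: "mset (comp_of Z') = \<mu>" using Z unfolding mset_comp_of by simp
    have "Z' \<in> S_mat q r"
      unfolding S_mat_def
    proof (intro CollectI conjI allI impI)
      show "length Z' = length q" using Z' lZ by simp
    next
      fix i assume i: "i < length q"
      show "length (Z'!i) = length r" using Z' lZ rows[OF i] i lr by simp
      show "sum_list (Z'!i) = q!i" using Z' lZ rows[OF i] i \<sigma>(1) by (simp add: sum_list_perm)
    next
      fix j assume j: "j < length r"
      have "(\<Sum>i<length q. Z'!i!j) = (\<Sum>i<length q. Z!i!(\<sigma> j))"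
      proof (rule sum.cong)
        fix i assume "i \<in> {..<length q}"
        hence i: "i < length q" by simp
        have "Z'!i!j = permute_list \<sigma> (Z!i) ! j" using Z' lZ i by simp
        also have "\<dots> = Z!i!(\<sigma> j)" using rows[OF i] \<sigma>(1) j lr by (intro permute_list_nth) auto
        finally show "Z'!i!j = Z!i!(\<sigma> j)" .
      qed simp
      also have "\<dots> = r'!(\<sigma> j)" using cols permutes_in_image[OF \<sigma>(1)] j lr by simp
      also have "\<dots> = r!j" using \<sigma> j lr permute_list_nth[OF \<sigma>(1)] by auto
      finally show "(\<Sum>i<length q. Z'!i!j) = r!j" .
    qed
    then show "Z' \<in> {Z \<in> S_mat q r. mset (comp_of Z) = \<mu>}" using m by simp
  qed
  have inj: "inj_on ?F {Z \<in> S_mat q r'. mset (comp_of Z) = \<mu>}"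
  proof (rule inj_onI)
    fix Z1 Z2 assume Z1: "Z1 \<in> {Z \<in> S_mat q r'. mset (comp_of Z) = \<mu>}"
      and Z2: "Z2 \<in> {Z \<in> S_mat q r'. mset (comp_of Z) = \<mu>}" and e: "?F Z1 = ?F Z2"
    have l1: "length Z1 = length q" and l2: "length Z2 = length q"
      and r1: "\<And>i. i < length q \<Longrightarrow> length (Z1!i) = length r'"
      and r2: "\<And>i. i < length q \<Longrightarrow> length (Z2!i) = length r'"
      using Z1 Z2 unfolding S_mat_def by auto
    show "Z1 = Z2"
    proof (rule nth_equalityI)
      show "length Z1 = length Z2" using l1 l2 by simp
    next
      fix i assume i: "i < length Z1"
      hence i': "i < length q" using l1 by simp
      have pe: "permute_list \<sigma> (Z1!i) = permute_list \<sigma> (Z2!i)"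
        using e i l1 l2 by (metis nth_map)
      show "Z1!i = Z2!i"
      proof (rule nth_equalityI)
        show "length (Z1!i) = length (Z2!i)" using r1[OF i'] r2[OF i'] by simp
      next
        fix k assume k: "k < length (Z1!i)"
        hence k': "k < length r'" using r1[OF i'] by simp
        have ik: "Hilbert_Choice.inv \<sigma> k < length r'" using permutes_in_image[OF permutes_inv[OF \<sigma>(1)]] k' by simp
        have sk: "\<sigma> (Hilbert_Choice.inv \<sigma> k) = k" using permutes_inverses(1)[OF \<sigma>(1)] by simp
        have "Z1!i!k = permute_list \<sigma> (Z1!i) ! (Hilbert_Choice.inv \<sigma> k)"
          using permute_list_nth[of \<sigma> "Z1!i" "Hilbert_Choice.inv \<sigma> k"] \<sigma>(1) r1[OF i'] ik sk by simp
        also have "\<dots> = permute_list \<sigma> (Z2!i) ! (Hilbert_Choice.inv \<sigma> k)" using pe by simp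
        also have "\<dots> = Z2!i!k"
          using permute_list_nth[of \<sigma> "Z2!i" "Hilbert_Choice.inv \<sigma> k"] \<sigma>(1) r2[OF i'] ik sk by simp
        finally show "Z1!i!k = Z2!i!k" .
      qed
    qed
  qed
  have fin: "finite {Z \<in> S_mat q r. mset (comp_of Z) = \<mu>}" using finite_S_mat by simp
  show ?thesis unfolding Gc_def by (rule card_inj_on_le[OF inj img fin])
qed

lemma Gc_perm: "mset r = mset r' \<Longrightarrow> Gc q r \<mu> = Gc q r' \<mu>"
  by (metis Gc_le_perm le_antisym)


definition tr :: "nat \<Rightarrow> nat list list \<Rightarrow> nat list list" where
  "tr m Z = map (\<lambda>j. map (\<lambda>i. Z!i!j) [0..<length Z]) [0..<m]"

lemma sum_list_map_upt: "sum_list (map f [0..<k]) = (\<Sum>i<k. f i)"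
  by (induction k) auto

lemma mset_concat_sum: "mset (concat Z) = (\<Sum>i<length Z. mset (Z!i))"
proof -
  have "mset (concat Z) = sum_list (map mset Z)" by (induction Z) auto
  also have "\<dots> = (\<Sum>i<length Z. mset (Z!i))"
    by (subst map_nth[symmetric]) (simp only: map_map o_def sum_list_map_upt)
  finally show ?thesis .
qed

lemma mset_sum_nth: "mset xs = (\<Sum>j<length xs. {#xs!j#})"
proof -
  have "mset xs = sum_list (map (\<lambda>x. {#x#}) xs)" by (induction xs) auto
  also have "\<dots> = (\<Sum>j<length xs. {#xs!j#})"
    by (subst map_nth[symmetric]) (simp only: map_map o_def sum_list_map_upt)
  finally show ?thesis .
qed

lemma Gc_le_tr: "Gc q r \<mu> \<le> Gc r q \<mu>"
proof -
  let ?F = "tr (length r)"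
  have img: "?F ` {Z \<in> S_mat q r. mset (comp_of Z) = \<mu>} \<subseteq> {Z \<in> S_mat r q. mset (comp_of Z) = \<mu>}"
  proof
    fix Z' assume "Z' \<in> ?F ` {Z \<in> S_mat q r. mset (comp_of Z) = \<mu>}"
    then obtain Z where Z: "Z \<in> S_mat q r" "mset (comp_of Z) = \<mu>" and Z': "Z' = ?F Z" by blast
    have lZ: "length Z = length q" and rows: "\<And>i. i < length q \<Longrightarrow> length (Z!i) = length r \<and> sum_list (Z!i) = q!i"
      and cols: "\<And>j. j < length r \<Longrightarrow> (\<Sum>i<length q. Z!i!j) = r!j"
      using Z(1) unfolding S_mat_def by auto
    have "mset (concat Z') = (\<Sum>j<length r. \<Sum>i<length q. {#Z!i!j#})"
      unfolding mset_concat_sum Z' tr_def by (simp add: mset_sum_nth lZ)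
    also have "\<dots> = (\<Sum>i<length q. \<Sum>j<length r. {#Z!i!j#})" by (rule sum.swap)
    also have "\<dots> = mset (concat Z)"
      unfolding mset_concat_sum lZ by (rule sum.cong) (simp_all add: mset_sum_nth rows)
    finally have "mset (concat Z') = mset (concat Z)" .
    hence m: "mset (comp_of Z') = \<mu>" using Z unfolding mset_comp_of by simp
    have "Z' \<in> S_mat r q"
      unfolding S_mat_def
    proof (intro CollectI conjI allI impI)
      show "length Z' = length r" using Z' by (simp add: tr_def)
    next
      fix j assume j: "j < length r"
      show "length (Z'!j) = length q" using Z' lZ j by (simp add: tr_def)
      show "sum_list (Z'!j) = r!j" using Z' lZ j cols[OF j] by (simp add: tr_def sum_list_map_upt)
    next
      fix i assume i: "i < length q"
      have "(\<Sum>j<length r. Z'!j!i) = (\<Sum>j<length r. Z!i!j)"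
        using Z' lZ i by (simp add: tr_def)
      also have "\<dots> = sum_list (Z!i)" using rows[OF i]
        by (simp add: sum_list_sum_nth atLeast0LessThan)
      also have "\<dots> = q!i" using rows[OF i] by simp
      finally show "(\<Sum>j<length r. Z'!j!i) = q!i" .
    qed
    then show "Z' \<in> {Z \<in> S_mat r q. mset (comp_of Z) = \<mu>}" using m by simp
  qed
  have inj: "inj_on ?F {Z \<in> S_mat q r. mset (comp_of Z) = \<mu>}"
  proof (rule inj_onI)
    fix Z1 Z2 assume Z1: "Z1 \<in> {Z \<in> S_mat q r. mset (comp_of Z) = \<mu>}"
      and Z2: "Z2 \<in> {Z \<in> S_mat q r. mset (comp_of Z) = \<mu>}" and e: "?F Z1 = ?F Z2"
    have l1: "length Z1 = length q" and l2: "length Z2 = length q"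
      and r1: "\<And>i. i < length q \<Longrightarrow> length (Z1!i) = length r"
      and r2: "\<And>i. i < length q \<Longrightarrow> length (Z2!i) = length r"
      using Z1 Z2 unfolding S_mat_def by auto
    show "Z1 = Z2"
    proof (rule nth_equalityI)
      show "length Z1 = length Z2" using l1 l2 by simp
    next
      fix i assume i: "i < length Z1"
      hence i': "i < length q" using l1 by simp
      show "Z1!i = Z2!i"
      proof (rule nth_equalityI)
        show "length (Z1!i) = length (Z2!i)" using r1[OF i'] r2[OF i'] by simp
      next
        fix k assume k: "k < length (Z1!i)"
        hence k': "k < length r" using r1[OF i'] by simp
        have "?F Z1 ! k ! i = ?F Z2 ! k ! i" using e by simp
        then show "Z1!i!k = Z2!i!k" using k' i' l1 l2 by (simp add: tr_def)
      qed
    qed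
  qed
  have fin: "finite {Z \<in> S_mat r q. mset (comp_of Z) = \<mu>}" using finite_S_mat by simp
  show ?thesis unfolding Gc_def by (rule card_inj_on_le[OF inj img fin])
qed

lemma Gc_tr: "Gc q r \<mu> = Gc r q \<mu>"
  by (metis Gc_le_tr le_antisym)

lemma Gc_sum:
  assumes q: "q \<in> compositions n"
  shows "(\<Sum>c\<in>{c \<in> compositions n. mset c = \<mu>}. struct_const q r c) = Gc q r \<mu>"
proof -
  have "{Z \<in> S_mat q r. mset (comp_of Z) = \<mu>} =
        (\<Union>c\<in>{c \<in> compositions n. mset c = \<mu>}. {Z \<in> S_mat q r. comp_of Z = c})"
    using comp_of_in[OF _ q] by auto
  hence "Gc q r \<mu> = card (\<Union>c\<in>{c \<in> compositions n. mset c = \<mu>}. {Z \<in> S_mat q r. comp_of Z = c})"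
    unfolding Gc_def by simp
  also have "\<dots> = (\<Sum>c\<in>{c \<in> compositions n. mset c = \<mu>}. card {Z \<in> S_mat q r. comp_of Z = c})"
    by (rule card_UN_disjoint) (auto simp: finite_compositions finite_S_mat)
  finally show ?thesis unfolding struct_const_def by simp
qed

lemma struct_const_diag:
  assumes "\<forall>a\<in>set c. 0 < a"
  shows "struct_const c q c = Gc c q (mset c)"
proof -
  have "{Z \<in> S_mat c q. comp_of Z = c} = {Z \<in> S_mat c q. mset (comp_of Z) = mset c}"
  proof (intro Collect_cong conj_cong refl iffI)
    fix Z assume "Z \<in> S_mat c q" "mset (comp_of Z) = mset c"
    then show "comp_of Z = c" using lemmaA(2)[OF _ assms, of Z q] by (metis order_refl size_mset)
  qed simp
  then show ?thesis unfolding struct_const_def Gc_def by simp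
qed

lemma struct_const_zero:
  assumes "\<forall>a\<in>set s. 0 < a" "length c \<le> length s" "c \<noteq> s"
  shows "struct_const s q c = 0"
proof -
  have "{Z \<in> S_mat s q. comp_of Z = c} = {}"
    using lemmaA[OF _ assms(1)] assms(2,3) by force
  then show ?thesis unfolding struct_const_def by (metis card.empty)
qed


lemma sum_mod_cong: "(\<And>i. i \<in> A \<Longrightarrow> f i mod m = g i mod m) \<Longrightarrow> sum f A mod m = sum g A mod (m::int)"
  by (metis (no_types, lifting) mod_sum_eq sum.cong)

lemma S_mat_single:
  assumes "q \<in> compositions n"
  shows "S_mat q [n] = {map (\<lambda>a. [a]) q}"
proof
  show "S_mat q [n] \<subseteq> {map (\<lambda>a. [a]) q}"
  proof
    fix Z assume Z: "Z \<in> S_mat q [n]"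
    have "Z = map (\<lambda>a. [a]) q"
    proof (rule nth_equalityI)
      show "length Z = length (map (\<lambda>a. [a]) q)" using Z unfolding S_mat_def by simp
    next
      fix i assume "i < length Z"
      hence i: "i < length q" using Z unfolding S_mat_def by simp
      then have "length (Z!i) = 1" "sum_list (Z!i) = q!i" using Z unfolding S_mat_def by auto
      then show "Z!i = map (\<lambda>a. [a]) q ! i" using i by (cases "Z!i") auto
    qed
    then show "Z \<in> {map (\<lambda>a. [a]) q}" by simp
  qed
next
  have "(\<Sum>i<length q. q!i) = n" using assms unfolding compositions_def
    by (simp add: sum_list_sum_nth atLeast0LessThan)
  then show "{map (\<lambda>a. [a]) q} \<subseteq> S_mat q [n]" unfolding S_mat_def by auto
qed

lemma struct_const_unit:
  assumes "q \<in> compositions n"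
  shows "struct_const q [n] c = (if c = q then 1 else 0)"
proof -
  have "comp_of (map (\<lambda>a. [a]) q) = q" using assms unfolding compositions_def comp_of_def
    by (induction q) auto
  then have "{Z \<in> {map (\<lambda>a. [a]) q}. comp_of Z = c} = (if c = q then {map (\<lambda>a. [a]) q} else {})"
    by auto
  then show ?thesis unfolding struct_const_def S_mat_single[OF assms] by simp
qed

locale DA =
  fixes n p :: nat
  assumes n1: "1 \<le> n" and pr: "Factorial_Ring.prime p"
begin

abbreviation R where "R \<equiv> descent_alg_mod n p"
abbreviation C where "C \<equiv> compositions n"

definition mul :: "(nat list \<Rightarrow> int) \<Rightarrow> (nat list \<Rightarrow> int) \<Rightarrow> nat list \<Rightarrow> int" where
  "mul f g c = (\<Sum>q\<in>C. \<Sum>r\<in>C. f q * g r * int (struct_const q r c))"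

definition cs :: "(nat list \<Rightarrow> int) \<Rightarrow> nat multiset \<Rightarrow> int" where
  "cs x \<mu> = (\<Sum>c\<in>{c\<in>C. mset c = \<mu>}. x c)"

definition K where "K = {x \<in> carrier R. \<forall>\<mu>. cs x \<mu> mod p = 0}"

definition neg :: "(nat list \<Rightarrow> int) \<Rightarrow> nat list \<Rightarrow> int" where
  "neg x = (\<lambda>c. (- x c) mod p)"

definition diff :: "(nat list \<Rightarrow> int) \<Rightarrow> (nat list \<Rightarrow> int) \<Rightarrow> nat list \<Rightarrow> int" where
  "diff x y = (\<lambda>c. (x c - y c) mod p)"

definition Ik where "Ik k = {x \<in> carrier R. \<forall>c. length c < k \<longrightarrow> x c = 0}"

lemma p2: "2 \<le> p" using pr by (simp add: prime_ge_2_nat)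
lemma ppos: "0 < int p" using p2 by simp
lemma ppos': "0 < p" using p2 by simp
lemma mod_nn[simp]: "0 \<le> a mod int p" using ppos by simp
lemma mod_lt[simp]: "a mod int p < int p" using ppos by simp

lemma carrier_R: "carrier R = {f. (\<forall>q. f q \<in> {0..<int p}) \<and> (\<forall>q. q \<notin> C \<longrightarrow> f q = 0)}"
  by (simp add: descent_alg_mod_def)
lemma mult_R: "x \<otimes>\<^bsub>R\<^esub> y = (\<lambda>c. if c \<in> C then mul x y c mod p else 0)"
  unfolding mul_def by (simp add: descent_alg_mod_def)
lemma add_R: "x \<oplus>\<^bsub>R\<^esub> y = (\<lambda>c. (x c + y c) mod p)"
  by (simp add: descent_alg_mod_def)
lemma one_R: "\<one>\<^bsub>R\<^esub> = (\<lambda>c. if c = [n] then 1 else 0)"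
  by (simp add: descent_alg_mod_def)
lemma zero_R: "\<zero>\<^bsub>R\<^esub> = (\<lambda>c. 0)"
  by (simp add: descent_alg_mod_def)

lemma nC: "[n] \<in> C" using n1 by (simp add: compositions_def)

lemma carrierI: "(\<And>q. 0 \<le> f q \<and> f q < int p) \<Longrightarrow> (\<And>q. q \<notin> C \<Longrightarrow> f q = 0) \<Longrightarrow> f \<in> carrier R"
  by (simp add: carrier_R)
lemma carrierD: "f \<in> carrier R \<Longrightarrow> 0 \<le> f q \<and> f q < int p"
  "f \<in> carrier R \<Longrightarrow> q \<notin> C \<Longrightarrow> f q = 0"
  by (auto simp: carrier_R)

lemma mod_id: "f \<in> carrier R \<Longrightarrow> f q mod int p = f q"
  using carrierD(1)[of f q] by simp

lemma add_closed: "x \<in> carrier R \<Longrightarrow> y \<in> carrier R \<Longrightarrow> x \<oplus>\<^bsub>R\<^esub> y \<in> carrier R"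
  by (rule carrierI) (auto simp: add_R ppos' carrierD)
lemma mult_closed: "x \<otimes>\<^bsub>R\<^esub> y \<in> carrier R"
  by (rule carrierI) (auto simp: mult_R ppos')
lemma one_closed: "\<one>\<^bsub>R\<^esub> \<in> carrier R"
  by (rule carrierI) (use p2 nC in \<open>auto simp: one_R\<close>)
lemma zero_closed: "\<zero>\<^bsub>R\<^esub> \<in> carrier R"
  by (rule carrierI) (auto simp: zero_R ppos')
lemma neg_closed: "x \<in> carrier R \<Longrightarrow> neg x \<in> carrier R"
  by (rule carrierI) (auto simp: neg_def ppos' carrierD)
lemma diff_closed: "x \<in> carrier R \<Longrightarrow> y \<in> carrier R \<Longrightarrow> diff x y \<in> carrier R"
  by (rule carrierI) (auto simp: diff_def ppos' carrierD)

lemma add_assoc: "x \<oplus>\<^bsub>R\<^esub> (y \<oplus>\<^bsub>R\<^esub> z) = (x \<oplus>\<^bsub>R\<^esub> y) \<oplus>\<^bsub>R\<^esub> z"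
  by (simp add: add_R mod_simps add.assoc)
lemma add_comm: "x \<oplus>\<^bsub>R\<^esub> y = y \<oplus>\<^bsub>R\<^esub> x"
  by (simp add: add_R add.commute)
lemma zero_add: "x \<in> carrier R \<Longrightarrow> \<zero>\<^bsub>R\<^esub> \<oplus>\<^bsub>R\<^esub> x = x"
  by (simp add: add_R zero_R mod_id)
lemma add_zero: "x \<in> carrier R \<Longrightarrow> x \<oplus>\<^bsub>R\<^esub> \<zero>\<^bsub>R\<^esub> = x"
  by (simp add: add_R zero_R mod_id)
lemma diff_add: "x \<in> carrier R \<Longrightarrow> diff x y \<oplus>\<^bsub>R\<^esub> y = x"
  by (simp add: add_R diff_def mod_simps mod_id)

lemma inv_add: assumes x: "x \<in> carrier R" shows "inv\<^bsub>add_monoid R\<^esub> x = neg x"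
  unfolding m_inv_def
proof (rule the_equality)
  show "neg x \<in> carrier (add_monoid R) \<and> x \<otimes>\<^bsub>add_monoid R\<^esub> neg x = \<one>\<^bsub>add_monoid R\<^esub> \<and>
        neg x \<otimes>\<^bsub>add_monoid R\<^esub> x = \<one>\<^bsub>add_monoid R\<^esub>"
    using neg_closed[OF x] by (simp add: add_R zero_R neg_def mod_simps)
next
  fix y assume y: "y \<in> carrier (add_monoid R) \<and> x \<otimes>\<^bsub>add_monoid R\<^esub> y = \<one>\<^bsub>add_monoid R\<^esub> \<and>
        y \<otimes>\<^bsub>add_monoid R\<^esub> x = \<one>\<^bsub>add_monoid R\<^esub>"
  hence yc: "y \<in> carrier R" and e: "\<And>c. (x c + y c) mod p = 0"
    by (auto simp: add_R zero_R fun_eq_iff)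
  show "y = neg x"
  proof
    fix c
    have "y c = y c mod p" using mod_id[OF yc] by simp
    also have "\<dots> = (- x c + (x c + y c)) mod p" by simp
    also have "\<dots> = (- x c + (x c + y c) mod p) mod p" by (simp add: mod_simps)
    also have "\<dots> = neg x c" using e by (simp add: neg_def)
    finally show "y c = neg x c" .
  qed
qed


lemma mul_mod_cong:
  assumes "\<And>r. u r mod int p = v r mod int p"
  shows "mul a u c mod int p = mul a v c mod int p"
  unfolding mul_def
proof (rule sum_mod_cong)
  fix q
  show "(\<Sum>r\<in>C. a q * u r * int (struct_const q r c)) mod int p =
        (\<Sum>r\<in>C. a q * v r * int (struct_const q r c)) mod int p"
  proof (rule sum_mod_cong)
    fix r
    show "a q * u r * int (struct_const q r c) mod int p = a q * v r * int (struct_const q r c) mod int p"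
      using mod_mult_cong[OF mod_mult_cong[OF refl assms[of r]] refl] by blast
  qed
qed

lemma mul_add: "mul a (\<lambda>r. u r + v r) c = mul a u c + mul a v c"
  unfolding mul_def by (simp add: sum.distrib algebra_simps)

lemma distrib_l: "a \<otimes>\<^bsub>R\<^esub> (u \<oplus>\<^bsub>R\<^esub> v) = (a \<otimes>\<^bsub>R\<^esub> u) \<oplus>\<^bsub>R\<^esub> (a \<otimes>\<^bsub>R\<^esub> v)"
proof
  fix c
  have "mul a (u \<oplus>\<^bsub>R\<^esub> v) c mod p = mul a (\<lambda>r. u r + v r) c mod p"
    by (rule mul_mod_cong) (simp add: add_R)
  then show "(a \<otimes>\<^bsub>R\<^esub> (u \<oplus>\<^bsub>R\<^esub> v)) c = ((a \<otimes>\<^bsub>R\<^esub> u) \<oplus>\<^bsub>R\<^esub> (a \<otimes>\<^bsub>R\<^esub> v)) c"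
    by (simp add: mult_R add_R mul_add mod_simps)
qed

lemma unit_r: assumes x: "x \<in> carrier R" shows "x \<otimes>\<^bsub>R\<^esub> \<one>\<^bsub>R\<^esub> = x"
proof
  fix c
  show "(x \<otimes>\<^bsub>R\<^esub> \<one>\<^bsub>R\<^esub>) c = x c"
  proof (cases "c \<in> C")
    case False then show ?thesis using carrierD(2)[OF x False] by (simp add: mult_R)
  next
    case True
    have "mul x \<one>\<^bsub>R\<^esub> c = (\<Sum>q\<in>C. x q * int (struct_const q [n] c))"
      unfolding mul_def
    proof (rule sum.cong[OF refl])
      fix q assume q: "q \<in> C"
      have "(\<Sum>r\<in>C. x q * \<one>\<^bsub>R\<^esub> r * int (struct_const q r c)) =
            (\<Sum>r\<in>C. if r = [n] then x q * int (struct_const q [n] c) else 0)"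
        by (rule sum.cong) (auto simp: one_R)
      also have "\<dots> = x q * int (struct_const q [n] c)"
        using finite_compositions nC by (simp add: sum.delta)
      finally show "(\<Sum>r\<in>C. x q * \<one>\<^bsub>R\<^esub> r * int (struct_const q r c)) = x q * int (struct_const q [n] c)" .
    qed
    also have "\<dots> = (\<Sum>q\<in>C. if q = c then x q else 0)"
      by (rule sum.cong[OF refl]) (simp add: struct_const_unit)
    also have "\<dots> = x c" using True finite_compositions by (simp add: sum.delta)
    finally show ?thesis using True mod_id[OF x] by (simp add: mult_R)
  qed
qed

lemma key_cs:
  "cs (x \<otimes>\<^bsub>R\<^esub> y) \<mu> mod p = (\<Sum>q\<in>C. \<Sum>r\<in>C. x q * y r * int (Gc q r \<mu>)) mod p"
proof -
  have "cs (x \<otimes>\<^bsub>R\<^esub> y) \<mu> = (\<Sum>c\<in>{c\<in>C. mset c = \<mu>}. mul x y c mod p)"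
    unfolding cs_def by (rule sum.cong) (auto simp: mult_R)
  hence "cs (x \<otimes>\<^bsub>R\<^esub> y) \<mu> mod p = (\<Sum>c\<in>{c\<in>C. mset c = \<mu>}. mul x y c) mod p"
    by (simp add: mod_sum_eq)
  also have "(\<Sum>c\<in>{c\<in>C. mset c = \<mu>}. mul x y c) = (\<Sum>q\<in>C. \<Sum>r\<in>C. x q * y r * int (Gc q r \<mu>))"
    unfolding mul_def
  proof -
    have "(\<Sum>c\<in>{c\<in>C. mset c = \<mu>}. \<Sum>q\<in>C. \<Sum>r\<in>C. x q * y r * int (struct_const q r c))
       = (\<Sum>q\<in>C. \<Sum>c\<in>{c\<in>C. mset c = \<mu>}. \<Sum>r\<in>C. x q * y r * int (struct_const q r c))"
      by (rule sum.swap)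
    also have "\<dots> = (\<Sum>q\<in>C. \<Sum>r\<in>C. \<Sum>c\<in>{c\<in>C. mset c = \<mu>}. x q * y r * int (struct_const q r c))"
      by (rule sum.cong[OF refl], rule sum.swap)
    also have "\<dots> = (\<Sum>q\<in>C. \<Sum>r\<in>C. x q * y r * int (Gc q r \<mu>))"
      by (rule sum.cong[OF refl], rule sum.cong[OF refl]) (simp add: Gc_sum[symmetric] sum_distrib_left of_nat_sum)
    finally show "(\<Sum>c\<in>{c\<in>C. mset c = \<mu>}. \<Sum>q\<in>C. \<Sum>r\<in>C. x q * y r * int (struct_const q r c))
       = (\<Sum>q\<in>C. \<Sum>r\<in>C. x q * y r * int (Gc q r \<mu>))" .
  qed
  finally show ?thesis .
qed

lemma grouping:
  assumes y: "\<And>\<mu>. cs y \<mu> mod p = 0"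
    and w: "\<And>r r'. r \<in> C \<Longrightarrow> r' \<in> C \<Longrightarrow> mset r = mset r' \<Longrightarrow> w r = w r'"
  shows "(\<Sum>r\<in>C. y r * w r) mod p = 0"
proof -
  have "(\<Sum>r\<in>C. y r * w r) = (\<Sum>\<nu>\<in>mset ` C. \<Sum>r\<in>{r. r \<in> C \<and> mset r = \<nu>}. y r * w r)"
    by (rule sum.image_gen[OF finite_compositions])
  also have "\<dots> mod p = (\<Sum>\<nu>\<in>mset ` C. (\<Sum>r\<in>{r. r \<in> C \<and> mset r = \<nu>}. y r * w r) mod p) mod p"
    by (simp add: mod_sum_eq)
  also have "\<dots> = 0"
  proof -
    have "(\<Sum>r\<in>{r. r \<in> C \<and> mset r = \<nu>}. y r * w r) mod p = 0" if nu: "\<nu> \<in> mset ` C" for \<nu>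
    proof -
      obtain r0 where r0: "r0 \<in> C" "mset r0 = \<nu>" using nu by blast
      have "(\<Sum>r\<in>{r. r \<in> C \<and> mset r = \<nu>}. y r * w r) = (\<Sum>r\<in>{r. r \<in> C \<and> mset r = \<nu>}. y r * w r0)"
      proof (rule sum.cong[OF refl])
        fix r assume "r \<in> {r. r \<in> C \<and> mset r = \<nu>}"
        then show "y r * w r = y r * w r0" using w[of r r0] r0 by simp
      qed
      also have "\<dots> = w r0 * cs y \<nu>" unfolding cs_def by (simp add: sum_distrib_left mult.commute)
      also have "\<dots> mod p = (w r0 * (cs y \<nu> mod p)) mod p" by (simp add: mod_mult_right_eq)
      also have "\<dots> = 0" using y[of \<nu>] by simp
      finally show ?thesis .
    qed
    then show ?thesis by simp
  qed
  finally show ?thesis .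
qed


lemma K_sub: "K \<subseteq> carrier R" unfolding K_def by auto

lemma zero_K: "\<zero>\<^bsub>R\<^esub> \<in> K"
  unfolding K_def cs_def using zero_closed by (simp add: zero_R)

lemma add_K: assumes "x \<in> K" "y \<in> K" shows "x \<oplus>\<^bsub>R\<^esub> y \<in> K"
proof -
  have xc: "x \<in> carrier R" and yc: "y \<in> carrier R" and cx: "\<And>\<mu>. cs x \<mu> mod p = 0" and cy: "\<And>\<mu>. cs y \<mu> mod p = 0"
    using assms unfolding K_def by auto
  have "cs (x \<oplus>\<^bsub>R\<^esub> y) \<mu> mod p = 0" for \<mu>
  proof -
    have "cs (x \<oplus>\<^bsub>R\<^esub> y) \<mu> mod p = (cs x \<mu> + cs y \<mu>) mod p"
      unfolding cs_def add_R by (simp add: mod_sum_eq sum.distrib)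
    also have "\<dots> = (cs x \<mu> mod p + cs y \<mu> mod p) mod p" by (simp add: mod_simps)
    finally show ?thesis using cx cy by simp
  qed
  then show ?thesis unfolding K_def using add_closed[OF xc yc] by simp
qed

lemma neg_K: assumes "x \<in> K" shows "neg x \<in> K"
proof -
  have xc: "x \<in> carrier R" and cx: "\<And>\<mu>. cs x \<mu> mod p = 0"
    using assms unfolding K_def by auto
  have "cs (neg x) \<mu> mod p = 0" for \<mu>
  proof -
    have "cs (neg x) \<mu> mod p = (- cs x \<mu>) mod p"
      unfolding cs_def neg_def by (simp add: mod_sum_eq sum_negf)
    also have "\<dots> = (- (cs x \<mu> mod p)) mod p" by (simp add: mod_simps)
    finally show ?thesis using cx by simp
  qed
  then show ?thesis unfolding K_def using neg_closed[OF xc] by simp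
qed

lemma mult_K: assumes "y \<in> K" shows "a \<otimes>\<^bsub>R\<^esub> y \<in> K"
proof -
  have cy: "\<And>\<mu>. cs y \<mu> mod p = 0" using assms unfolding K_def by auto
  have "cs (a \<otimes>\<^bsub>R\<^esub> y) \<mu> mod p = 0" for \<mu>
  proof -
    have "cs (a \<otimes>\<^bsub>R\<^esub> y) \<mu> mod p = (\<Sum>q\<in>C. \<Sum>r\<in>C. a q * y r * int (Gc q r \<mu>)) mod p"
      by (rule key_cs)
    also have "\<dots> = (\<Sum>q\<in>C. (\<Sum>r\<in>C. y r * (a q * int (Gc q r \<mu>))) mod p) mod p"
      by (simp add: mod_sum_eq mult_ac)
    also have "\<dots> = 0"
    proof -
      have "(\<Sum>r\<in>C. y r * (a q * int (Gc q r \<mu>))) mod p = 0" for q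
        by (rule grouping[OF cy]) (metis Gc_perm)
      then show ?thesis by simp
    qed
    finally show ?thesis .
  qed
  then show ?thesis unfolding K_def using mult_closed by simp
qed

lemma comm_K: assumes "a \<in> carrier R" "b \<in> carrier R"
  shows "diff (a \<otimes>\<^bsub>R\<^esub> b) (b \<otimes>\<^bsub>R\<^esub> a) \<in> K"
proof -
  have "cs (diff (a \<otimes>\<^bsub>R\<^esub> b) (b \<otimes>\<^bsub>R\<^esub> a)) \<mu> mod p = 0" for \<mu>
  proof -
    have "cs (diff (a \<otimes>\<^bsub>R\<^esub> b) (b \<otimes>\<^bsub>R\<^esub> a)) \<mu> mod p
        = (cs (a \<otimes>\<^bsub>R\<^esub> b) \<mu> - cs (b \<otimes>\<^bsub>R\<^esub> a) \<mu>) mod p"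
      unfolding cs_def diff_def by (simp add: mod_sum_eq sum_subtractf)
    also have "\<dots> = (cs (a \<otimes>\<^bsub>R\<^esub> b) \<mu> mod p - cs (b \<otimes>\<^bsub>R\<^esub> a) \<mu> mod p) mod p"
      by (simp add: mod_simps)
    also have "cs (b \<otimes>\<^bsub>R\<^esub> a) \<mu> mod p = cs (a \<otimes>\<^bsub>R\<^esub> b) \<mu> mod p"
    proof -
      have "(\<Sum>q\<in>C. \<Sum>r\<in>C. b q * a r * int (Gc q r \<mu>)) = (\<Sum>r\<in>C. \<Sum>q\<in>C. b q * a r * int (Gc q r \<mu>))"
        by (rule sum.swap)
      also have "\<dots> = (\<Sum>r\<in>C. \<Sum>q\<in>C. a r * b q * int (Gc r q \<mu>))"
        by (intro sum.cong refl) (metis Gc_tr mult.commute)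
      finally show ?thesis using key_cs[of b a \<mu>] key_cs[of a b \<mu>] by simp
    qed
    finally show ?thesis by simp
  qed
  then show ?thesis unfolding K_def using diff_closed[OF mult_closed mult_closed] by simp
qed

lemma filt: assumes y: "y \<in> Ik k" and x: "x \<in> K" shows "y \<otimes>\<^bsub>R\<^esub> x \<in> Ik (Suc k)"
proof -
  have yc: "y \<in> carrier R" and y0: "\<And>c. length c < k \<Longrightarrow> y c = 0" using y unfolding Ik_def by auto
  have cx: "\<And>\<mu>. cs x \<mu> mod p = 0" using x unfolding K_def by auto
  have "(y \<otimes>\<^bsub>R\<^esub> x) c = 0" if lc: "length c < Suc k" for c
  proof (cases "c \<in> C")
    case False then show ?thesis by (simp add: mult_R)
  next
    case True
    have cpos: "\<forall>a\<in>set c. 0 < a" using True unfolding compositions_def by simp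
    let ?F = "\<lambda>s. \<Sum>q\<in>C. y s * x q * int (struct_const s q c)"
    have z: "?F s = 0" if s: "s \<in> C - {c}" for s
    proof (cases "length s < k")
      case True then show ?thesis using y0 by simp
    next
      case False
      have "\<forall>a\<in>set s. 0 < a" using s unfolding compositions_def by simp
      then have "struct_const s q c = 0" for q
        using False lc s by (intro struct_const_zero) auto
      then show ?thesis by simp
    qed
    have "mul y x c = ?F c + (\<Sum>s\<in>C - {c}. ?F s)"
      unfolding mul_def by (rule sum.remove[OF finite_compositions True])
    also have "\<dots> = ?F c" using z by simp
    also have "\<dots> = y c * (\<Sum>q\<in>C. x q * int (Gc c q (mset c)))"
      by (simp add: struct_const_diag[OF cpos] sum_distrib_left mult_ac)
    finally have "mul y x c mod p = (y c * ((\<Sum>q\<in>C. x q * int (Gc c q (mset c))) mod p)) mod p"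
      by (simp add: mod_mult_right_eq)
    also have "(\<Sum>q\<in>C. x q * int (Gc c q (mset c))) mod p = 0"
      by (rule grouping[OF cx]) (metis Gc_perm)
    finally show ?thesis using True by (simp add: mult_R)
  qed
  then show ?thesis unfolding Ik_def using mult_closed by simp
qed

lemma Ik_top: assumes "x \<in> Ik (Suc n)" shows "x = \<zero>\<^bsub>R\<^esub>"
proof
  fix c
  have xc: "x \<in> carrier R" using assms unfolding Ik_def by simp
  show "x c = \<zero>\<^bsub>R\<^esub> c"
  proof (cases "c \<in> C")
    case True
    then have "length c \<le> n" using sum_list_ge_length[of c] unfolding compositions_def by simp
    then have "length c < Suc n" by simp
    then show ?thesis using assms unfolding Ik_def zero_R by blast
  next
    case False then show ?thesis using carrierD(2)[OF xc] by (simp add: zero_R)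
  qed
qed

lemma Ik0: "x \<in> carrier R \<Longrightarrow> x \<in> Ik 0" unfolding Ik_def by simp


lemma add_swap: "(m1 \<oplus>\<^bsub>R\<^esub> y1) \<oplus>\<^bsub>R\<^esub> (m2 \<oplus>\<^bsub>R\<^esub> y2) = (m1 \<oplus>\<^bsub>R\<^esub> m2) \<oplus>\<^bsub>R\<^esub> (y1 \<oplus>\<^bsub>R\<^esub> y2)"
  unfolding add_R mod_add_eq by (simp add: ac_simps)

lemma neg_add: "neg (x \<oplus>\<^bsub>R\<^esub> y) = neg x \<oplus>\<^bsub>R\<^esub> neg y"
  by (simp add: add_R neg_def mod_simps)

lemma comm_in_max:
  assumes M: "maximal_left_ideal R M" and a: "a \<in> carrier R" and b: "b \<in> carrier R"
  shows "diff (a \<otimes>\<^bsub>R\<^esub> b) (b \<otimes>\<^bsub>R\<^esub> a) \<in> M"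
proof (rule ccontr)
  let ?d = "diff (a \<otimes>\<^bsub>R\<^esub> b) (b \<otimes>\<^bsub>R\<^esub> a)"
  assume nd: "?d \<notin> M"
  have LI: "left_ideal R M" and Mne: "M \<noteq> carrier R"
    and Mmax: "\<And>J. left_ideal R J \<Longrightarrow> M \<subseteq> J \<Longrightarrow> J = M \<or> J = carrier R"
    using M unfolding maximal_left_ideal_def by auto
  have sg: "subgroup M (add_monoid R)" using LI unfolding left_ideal_def additive_subgroup_def by auto
  have Msub: "M \<subseteq> carrier R" using subgroup.subset[OF sg] by simp
  have Madd: "\<And>x y. x \<in> M \<Longrightarrow> y \<in> M \<Longrightarrow> x \<oplus>\<^bsub>R\<^esub> y \<in> M" using subgroup.m_closed[OF sg] by simp
  have M0: "\<zero>\<^bsub>R\<^esub> \<in> M" using subgroup.one_closed[OF sg] by simp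
  have Minv: "neg x \<in> M" if x: "x \<in> M" for x
    using subgroup.m_inv_closed[OF sg x] inv_add[of x] x Msub by auto
  have Mmul: "\<And>a x. a \<in> carrier R \<Longrightarrow> x \<in> M \<Longrightarrow> a \<otimes>\<^bsub>R\<^esub> x \<in> M"
    using LI unfolding left_ideal_def by auto
  define L where "L = {m \<oplus>\<^bsub>R\<^esub> y | m y. m \<in> M \<and> y \<in> K}"
  have Lsub: "L \<subseteq> carrier R" unfolding L_def using Msub K_sub add_closed by blast
  have "subgroup L (add_monoid R)"
    unfolding subgroup_def
  proof (intro conjI allI impI)
    show "L \<subseteq> carrier (add_monoid R)" using Lsub by simp
  next
    fix x y assume "x \<in> L" "y \<in> L"
    then obtain m1 y1 m2 y2 where "x = m1 \<oplus>\<^bsub>R\<^esub> y1" "y = m2 \<oplus>\<^bsub>R\<^esub> y2" "m1 \<in> M" "m2 \<in> M" "y1 \<in> K" "y2 \<in> K"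
      unfolding L_def by blast
    then have "x \<otimes>\<^bsub>add_monoid R\<^esub> y = (m1 \<oplus>\<^bsub>R\<^esub> m2) \<oplus>\<^bsub>R\<^esub> (y1 \<oplus>\<^bsub>R\<^esub> y2)"
      using add_swap by simp
    moreover have "m1 \<oplus>\<^bsub>R\<^esub> m2 \<in> M" "y1 \<oplus>\<^bsub>R\<^esub> y2 \<in> K"
      using Madd add_K \<open>m1 \<in> M\<close> \<open>m2 \<in> M\<close> \<open>y1 \<in> K\<close> \<open>y2 \<in> K\<close> by auto
    ultimately show "x \<otimes>\<^bsub>add_monoid R\<^esub> y \<in> L" unfolding L_def by blast
  next
    have "\<one>\<^bsub>add_monoid R\<^esub> = \<zero>\<^bsub>R\<^esub> \<oplus>\<^bsub>R\<^esub> \<zero>\<^bsub>R\<^esub>" using zero_add[OF zero_closed] by simp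
    then show "\<one>\<^bsub>add_monoid R\<^esub> \<in> L" unfolding L_def using M0 zero_K by blast
  next
    fix x assume "x \<in> L"
    then obtain m y where xy: "x = m \<oplus>\<^bsub>R\<^esub> y" "m \<in> M" "y \<in> K" unfolding L_def by blast
    have "inv\<^bsub>add_monoid R\<^esub> x = neg m \<oplus>\<^bsub>R\<^esub> neg y"
      using inv_add[of x] Lsub \<open>x \<in> L\<close> xy(1) neg_add by auto
    then show "inv\<^bsub>add_monoid R\<^esub> x \<in> L" unfolding L_def using Minv[OF xy(2)] neg_K[OF xy(3)] by blast
  qed
  moreover have "aa \<otimes>\<^bsub>R\<^esub> x \<in> L" if "aa \<in> carrier R" "x \<in> L" for aa x
  proof -
    obtain m y where xy: "x = m \<oplus>\<^bsub>R\<^esub> y" "m \<in> M" "y \<in> K" using \<open>x \<in> L\<close> unfolding L_def by blast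
    have "aa \<otimes>\<^bsub>R\<^esub> x = (aa \<otimes>\<^bsub>R\<^esub> m) \<oplus>\<^bsub>R\<^esub> (aa \<otimes>\<^bsub>R\<^esub> y)" using xy(1) distrib_l by simp
    then show ?thesis unfolding L_def using Mmul[OF that(1) xy(2)] mult_K[OF xy(3)] by blast
  qed
  ultimately have LL: "left_ideal R L" unfolding left_ideal_def additive_subgroup_def by blast
  have MsubL: "M \<subseteq> L"
  proof
    fix m assume "m \<in> M"
    then have "m = m \<oplus>\<^bsub>R\<^esub> \<zero>\<^bsub>R\<^esub>" using add_zero Msub by auto
    then show "m \<in> L" unfolding L_def using \<open>m \<in> M\<close> zero_K by blast
  qed
  have dL: "?d \<in> L"
  proof -
    have dc: "?d \<in> carrier R" using diff_closed[OF mult_closed mult_closed] .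
    have "?d = \<zero>\<^bsub>R\<^esub> \<oplus>\<^bsub>R\<^esub> ?d" using zero_add[OF dc] by simp
    then show ?thesis unfolding L_def using M0 comm_K[OF a b] by blast
  qed
  have "L = carrier R" using Mmax[OF LL MsubL] dL nd by blast
  then obtain m y where my: "\<one>\<^bsub>R\<^esub> = m \<oplus>\<^bsub>R\<^esub> y" "m \<in> M" "y \<in> K"
    using one_closed unfolding L_def by blast
  define z where "z = (\<lambda>j. ((\<lambda>w. w \<otimes>\<^bsub>R\<^esub> y) ^^ j) \<one>\<^bsub>R\<^esub>)"
  have zS: "z (Suc j) = z j \<otimes>\<^bsub>R\<^esub> y" for j unfolding z_def by simp
  have zI: "z j \<in> Ik j" for j
  proof (induction j)
    case 0 then show ?case unfolding z_def using Ik0[OF one_closed] by simp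
  next
    case (Suc j) then show ?case unfolding zS using filt my(3) by blast
  qed
  have zc: "z j \<in> carrier R" for j using zI[of j] unfolding Ik_def by simp
  have tel: "\<exists>m'\<in>M. \<one>\<^bsub>R\<^esub> = m' \<oplus>\<^bsub>R\<^esub> z j" for j
  proof (induction j)
    case 0
    have z0: "z 0 = \<one>\<^bsub>R\<^esub>" unfolding z_def by simp
    have "\<one>\<^bsub>R\<^esub> = \<zero>\<^bsub>R\<^esub> \<oplus>\<^bsub>R\<^esub> z 0" using zero_add[OF one_closed] z0 by simp
    then show ?case using M0 by blast
  next
    case (Suc j)
    then obtain m' where m': "m' \<in> M" "\<one>\<^bsub>R\<^esub> = m' \<oplus>\<^bsub>R\<^esub> z j" by blast
    have "z j = z j \<otimes>\<^bsub>R\<^esub> \<one>\<^bsub>R\<^esub>" using unit_r[OF zc] by simp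
    also have "\<dots> = (z j \<otimes>\<^bsub>R\<^esub> m) \<oplus>\<^bsub>R\<^esub> z (Suc j)" using my(1) distrib_l zS by simp
    finally have "\<one>\<^bsub>R\<^esub> = m' \<oplus>\<^bsub>R\<^esub> ((z j \<otimes>\<^bsub>R\<^esub> m) \<oplus>\<^bsub>R\<^esub> z (Suc j))"
      using m'(2) by simp
    then have "\<one>\<^bsub>R\<^esub> = (m' \<oplus>\<^bsub>R\<^esub> (z j \<otimes>\<^bsub>R\<^esub> m)) \<oplus>\<^bsub>R\<^esub> z (Suc j)"
      by (simp only: add_assoc)
    moreover have "m' \<oplus>\<^bsub>R\<^esub> (z j \<otimes>\<^bsub>R\<^esub> m) \<in> M" using Madd[OF m'(1) Mmul[OF zc my(2)]] .
    ultimately show ?case by blast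
  qed
  obtain m' where m': "m' \<in> M" "\<one>\<^bsub>R\<^esub> = m' \<oplus>\<^bsub>R\<^esub> z (Suc n)" using tel by blast
  have "z (Suc n) = \<zero>\<^bsub>R\<^esub>" using Ik_top zI by blast
  then have "\<one>\<^bsub>R\<^esub> \<in> M" using m' add_zero Msub by auto
  then have "carrier R \<subseteq> M"
  proof -
    assume o: "\<one>\<^bsub>R\<^esub> \<in> M"
    show "carrier R \<subseteq> M"
    proof
      fix x assume x: "x \<in> carrier R"
      have "x \<otimes>\<^bsub>R\<^esub> \<one>\<^bsub>R\<^esub> \<in> M" by (rule Mmul[OF x o])
      then show "x \<in> M" using unit_r[OF x] by simp
    qed
  qed
  then show False using Mne Msub by blast
qed

lemma J_add: "x \<in> jacobson_radical R \<Longrightarrow> y \<in> jacobson_radical R \<Longrightarrow> x \<oplus>\<^bsub>R\<^esub> y \<in> jacobson_radical R"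
proof -
  assume x: "x \<in> jacobson_radical R" and y: "y \<in> jacobson_radical R"
  have "x \<oplus>\<^bsub>R\<^esub> y \<in> M" if M: "maximal_left_ideal R M" for M
  proof -
    have sg: "subgroup M (add_monoid R)" using M unfolding maximal_left_ideal_def left_ideal_def additive_subgroup_def by auto
    have "x \<in> M" "y \<in> M" using x y M unfolding jacobson_radical_def by auto
    then show ?thesis using subgroup.m_closed[OF sg] by simp
  qed
  then show ?thesis using x y add_closed unfolding jacobson_radical_def by auto
qed

lemma d_J: "a \<in> carrier R \<Longrightarrow> b \<in> carrier R \<Longrightarrow> diff (a \<otimes>\<^bsub>R\<^esub> b) (b \<otimes>\<^bsub>R\<^esub> a) \<in> jacobson_radical R"
  unfolding jacobson_radical_def using comm_in_max diff_closed[OF mult_closed mult_closed] by auto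

lemma coset_sub:
  assumes a: "a \<in> carrier R" and b: "b \<in> carrier R"
  shows "jacobson_radical R +>\<^bsub>R\<^esub> (a \<otimes>\<^bsub>R\<^esub> b) \<subseteq> jacobson_radical R +>\<^bsub>R\<^esub> (b \<otimes>\<^bsub>R\<^esub> a)"
proof
  let ?J = "jacobson_radical R"
  fix x assume "x \<in> ?J +>\<^bsub>R\<^esub> (a \<otimes>\<^bsub>R\<^esub> b)"
  then obtain h where h: "h \<in> ?J" "x = h \<oplus>\<^bsub>R\<^esub> (a \<otimes>\<^bsub>R\<^esub> b)"
    unfolding a_r_coset_def r_coset_def by auto
  let ?d = "diff (a \<otimes>\<^bsub>R\<^esub> b) (b \<otimes>\<^bsub>R\<^esub> a)"
  have "?d \<oplus>\<^bsub>R\<^esub> (b \<otimes>\<^bsub>R\<^esub> a) = a \<otimes>\<^bsub>R\<^esub> b" by (rule diff_add[OF mult_closed])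
  then have "x = h \<oplus>\<^bsub>R\<^esub> (?d \<oplus>\<^bsub>R\<^esub> (b \<otimes>\<^bsub>R\<^esub> a))" using h(2) by simp
  then have "x = (h \<oplus>\<^bsub>R\<^esub> ?d) \<oplus>\<^bsub>R\<^esub> (b \<otimes>\<^bsub>R\<^esub> a)" by (simp only: add_assoc)
  moreover have "h \<oplus>\<^bsub>R\<^esub> ?d \<in> ?J" using J_add[OF h(1) d_J[OF a b]] .
  ultimately show "x \<in> ?J +>\<^bsub>R\<^esub> (b \<otimes>\<^bsub>R\<^esub> a)"
    unfolding a_r_coset_def r_coset_def by auto
qed

end

theorem theorem2p3:
  fixes n p :: nat
  assumes "n \<ge> 1" and "Factorial_Ring.prime p"
  shows "\<forall>A \<in> carrier (descent_alg_mod n p Quot jacobson_radical (descent_alg_mod n p)).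
         \<forall>B \<in> carrier (descent_alg_mod n p Quot jacobson_radical (descent_alg_mod n p)).
           A \<otimes>\<^bsub>descent_alg_mod n p Quot jacobson_radical (descent_alg_mod n p)\<^esub> B
         = B \<otimes>\<^bsub>descent_alg_mod n p Quot jacobson_radical (descent_alg_mod n p)\<^esub> A"
proof -
  interpret DA n p using assms by unfold_locales
  let ?J = "jacobson_radical R"
  have Jc: "?J \<subseteq> carrier R" unfolding jacobson_radical_def by auto
  have sub: "A \<subseteq> carrier R" if "A \<in> carrier (R Quot ?J)" for A
  proof -
    have "A \<in> a_rcosets\<^bsub>R\<^esub> ?J" using that by (simp add: FactRing_def)
    then obtain a where a: "a \<in> carrier R" "A = ?J +>\<^bsub>R\<^esub> a"
      unfolding A_RCOSETS_def RCOSETS_def a_r_coset_def by auto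
    then show ?thesis using Jc add_closed unfolding a_r_coset_def r_coset_def by auto
  qed
  have eq: "?J +>\<^bsub>R\<^esub> (a \<otimes>\<^bsub>R\<^esub> b) = ?J +>\<^bsub>R\<^esub> (b \<otimes>\<^bsub>R\<^esub> a)"
    if "a \<in> carrier R" "b \<in> carrier R" for a b
    using coset_sub[OF that] coset_sub[OF that(2,1)] by blast
  show ?thesis
  proof (intro ballI)
    fix A B assume A: "A \<in> carrier (R Quot ?J)" and B: "B \<in> carrier (R Quot ?J)"
    have "A \<otimes>\<^bsub>R Quot ?J\<^esub> B = (\<Union>a\<in>A. \<Union>b\<in>B. ?J +>\<^bsub>R\<^esub> (a \<otimes>\<^bsub>R\<^esub> b))"
      by (simp add: FactRing_def rcoset_mult_def)
    also have "\<dots> = (\<Union>b\<in>B. \<Union>a\<in>A. ?J +>\<^bsub>R\<^esub> (b \<otimes>\<^bsub>R\<^esub> a))"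
      using eq sub[OF A] sub[OF B] by blast
    also have "\<dots> = B \<otimes>\<^bsub>R Quot ?J\<^esub> A"
      by (simp add: FactRing_def rcoset_mult_def)
    finally show "A \<otimes>\<^bsub>R Quot ?J\<^esub> B = B \<otimes>\<^bsub>R Quot ?J\<^esub> A" .
  qed
qed

end
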